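(* Let $n\ge 1$. The set $\mathcal{DM}(n)$ of all disjoint multilinear interaction expressions in the $n$ variables $x_1,\dots,x_n$ is in one-to-one correspondence with the set $\mathfrak{G}(n)$ of equivalence classes of feature graphs on $n$ nodes under the reachability relation $\sim$; that is, there is a bijection $\mathcal{DM}(n)\to\mathfrak{G}(n)$.
   Context: A predictive model $y(\vec x)$ is a disjoint multilinear interaction expression (DMIE) if it can be written as $y(\vec{x}) = \sum_{i=1}^{k} \prod_{j=1}^{m_i} x_{i_j}$, where $x_{i_j}$ and $x_{k_l}$ are distinct variables whenever $i\neq k$ or $j\neq l$ (each variable occurs in at most one product, at most once). $\mathcal{DM}(n)$ denotes the set of all DMIE expressions of the $n$ variables $x_1,\dots,x_n$ (expressions are regarded as polynomial functions, so reordering factors or summands gives the same expression). A feature graph on $n$ nodes is a simple undirected graph with node set $N_n=\{1,\dots,n\}$, node $i$ corresponding to variable $x_i$; $\mathcal{G}(n)$ is the set of all such graphs. For $G_1,G_2\in\mathcal{G}(n)$, $G_1\sim G_2$ if for all $i,j\in N_n$, $i$ and $j$ are reachable from each other (connected by a path, a node being reachable from itself) in $G_1$ if and only if they are reachable in $G_2$. This is an equivalence relation, and $\mathfrak{G}(n)=\{[G]_\sim : G\in\mathcal{G}(n)\}$. *)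

theory Defs
  imports Complex_Main
begin

text \<open>Disjoint multilinear interaction expressions in the variables x_1..x_n,
  regarded as polynomial functions of an assignment x :: nat => real
  (only the values x 1, ..., x n matter).\<close>
definition DM :: "nat \<Rightarrow> ((nat \<Rightarrow> real) \<Rightarrow> real) set" where
  "DM n = {y. \<exists>(k::nat) (m::nat \<Rightarrow> nat) (v::nat \<Rightarrow> nat \<Rightarrow> nat).
      (\<forall>i<k. 1 \<le> m i) \<and>
      inj_on (\<lambda>(i, j). v i j) {(i, j). i < k \<and> j < m i} \<and>
      (\<lambda>(i, j). v i j) ` {(i, j). i < k \<and> j < m i} = {1..n} \<and>
      y = (\<lambda>x. \<Sum>i<k. \<Prod>j<m i. x (v i j))}"

definition feature_graphs :: "nat \<Rightarrow> nat set set set" where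
  "feature_graphs n = {E. E \<subseteq> {{i, j} | i j. i \<in> {1..n} \<and> j \<in> {1..n} \<and> i \<noteq> j}}"

definition reachable :: "nat set set \<Rightarrow> nat \<Rightarrow> nat \<Rightarrow> bool" where
  "reachable E i j \<longleftrightarrow> (i, j) \<in> {(a, b). {a, b} \<in> E}\<^sup>*"

definition graph_equiv :: "nat \<Rightarrow> (nat set set \<times> nat set set) set" where
  "graph_equiv n = {(G1, G2). G1 \<in> feature_graphs n \<and> G2 \<in> feature_graphs n \<and>
      (\<forall>i\<in>{1..n}. \<forall>j\<in>{1..n}. reachable G1 i j \<longleftrightarrow> reachable G2 i j)}"

definition graph_classes :: "nat \<Rightarrow> nat set set set set" where
  "graph_classes n = feature_graphs n // graph_equiv n"

end

theory Submission
  imports Defs "HOL-Library.Disjoint_Sets"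
begin

definition RG :: "nat \<Rightarrow> nat set set \<Rightarrow> (nat \<times> nat) set" where
  "RG n G = {(i, j). i \<in> {1..n} \<and> j \<in> {1..n} \<and> reachable G i j}"

lemma sym_edges: "sym {(a, b). {a, b} \<in> (G::nat set set)}"
  by (auto simp: sym_def insert_commute)

lemma equiv_RG: "equiv {1..n} (RG n G)"
proof (rule equivI)
  show "RG n G \<subseteq> {1..n} \<times> {1..n}" by (auto simp: RG_def)
  show "refl_on {1..n} (RG n G)" by (auto simp: refl_on_def RG_def reachable_def)
  show "sym (RG n G)"
    using sym_rtrancl[OF sym_edges[of G]] by (auto simp: sym_def RG_def reachable_def)
  show "trans (RG n G)"
    by (auto simp: trans_def RG_def reachable_def)
qed

lemma equiv_graph_equiv: "equiv (feature_graphs n) (graph_equiv n)"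
  by (rule equivI) (auto simp: refl_on_def sym_def trans_def graph_equiv_def)

lemma quotient_eq_rel:
  assumes "equiv A r" "equiv A s" "A // r = A // s"
  shows "r = s"
proof -
  have key: "(x, y) \<in> r \<longleftrightarrow> (\<exists>X\<in>A // r. x \<in> X \<and> y \<in> X)" if "equiv A r" for r x y
  proof
    assume "(x, y) \<in> r"
    then have "x \<in> A" "y \<in> A" using that by (auto dest: equiv_type)
    then show "\<exists>X\<in>A // r. x \<in> X \<and> y \<in> X"
      using \<open>(x, y) \<in> r\<close> that
      by (intro bexI[of _ "r``{x}"]) (auto intro: quotientI equiv_class_self simp: equiv_def refl_on_def)
  next
    assume "\<exists>X\<in>A // r. x \<in> X \<and> y \<in> X"
    then obtain a where "a \<in> A" "x \<in> r``{a}" "y \<in> r``{a}" by (auto elim: quotientE)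
    then show "(x, y) \<in> r" using that
      by (meson Image_singleton_iff equivE symE transE)
  qed
  show ?thesis using key[OF assms(1)] key[OF assms(2)] assms(3) by auto
qed

definition phi :: "nat \<Rightarrow> nat set set \<Rightarrow> nat set set" where
  "phi n G = {1..n} // RG n G"

definition Fg :: "nat \<Rightarrow> nat set set set \<Rightarrow> nat set set" where
  "Fg n C = phi n (SOME G. G \<in> C)"

lemma class_some:
  assumes "C \<in> graph_classes n"
  shows "(SOME G. G \<in> C) \<in> C" "C = graph_equiv n `` {SOME G. G \<in> C}"
    "(SOME G. G \<in> C) \<in> feature_graphs n"
proof -
  obtain G where G: "G \<in> feature_graphs n" "C = graph_equiv n `` {G}"
    using assms by (auto simp: graph_classes_def elim: quotientE)
  then have "G \<in> C" using equiv_class_self[OF equiv_graph_equiv] by auto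
  then show 1: "(SOME G. G \<in> C) \<in> C" by (rule someI)
  then have "(G, SOME G. G \<in> C) \<in> graph_equiv n" using G(2) by blast
  then have "graph_equiv n `` {G} = graph_equiv n `` {SOME G. G \<in> C}"
    by (rule equiv_class_eq[OF equiv_graph_equiv])
  then show "C = graph_equiv n `` {SOME G. G \<in> C}" using G(2) by (rule trans[rotated])
  from 1 G show "(SOME G. G \<in> C) \<in> feature_graphs n" by (auto simp: graph_equiv_def)
qed

lemma RG_eq_iff:
  assumes "G1 \<in> feature_graphs n" "G2 \<in> feature_graphs n"
  shows "(G1, G2) \<in> graph_equiv n \<longleftrightarrow> RG n G1 = RG n G2"
  using assms unfolding graph_equiv_def RG_def by auto

lemma Fg_bij: "bij_betw (Fg n) (graph_classes n) {P. partition_on {1..n} P}"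
proof (rule bij_betwI')
  fix C1 C2 assume C: "C1 \<in> graph_classes n" "C2 \<in> graph_classes n"
  show "(Fg n C1 = Fg n C2) = (C1 = C2)"
  proof
    assume "Fg n C1 = Fg n C2"
    then have "RG n (SOME G. G \<in> C1) = RG n (SOME G. G \<in> C2)"
      unfolding Fg_def phi_def by (intro quotient_eq_rel[OF equiv_RG equiv_RG])
    then have "((SOME G. G \<in> C1), (SOME G. G \<in> C2)) \<in> graph_equiv n"
      using RG_eq_iff class_some(3)[OF C(1)] class_some(3)[OF C(2)] by blast
    then show "C1 = C2"
      using class_some(2)[OF C(1)] class_some(2)[OF C(2)] equiv_class_eq[OF equiv_graph_equiv]
      by metis
  qed simp
next
  fix C assume "C \<in> graph_classes n"
  show "Fg n C \<in> {P. partition_on {1..n} P}"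
    unfolding Fg_def phi_def using partition_on_quotient[OF equiv_RG] by simp
next
  fix P assume "P \<in> {P. partition_on {1..n} P}"
  then have P: "partition_on {1..n} P" by simp
  define S where "S = {(x, y). \<exists>p \<in> P. x \<in> p \<and> y \<in> p}"
  define G where "G = {{i, j} | i j. \<exists>B\<in>P. i \<in> B \<and> j \<in> B \<and> i \<noteq> j}"
  have PU: "\<Union>P = {1..n}" using P by (simp add: partition_on_def)
  have Gf: "G \<in> feature_graphs n"
    unfolding G_def feature_graphs_def using PU by blast
  have trS: "trans S" using equiv_partition_on[OF P] unfolding S_def by (auto elim: equivE)
  have "RG n G = S"
  proof
    show "RG n G \<subseteq> S"
    proof
      fix z assume z: "z \<in> RG n G"
      obtain a b where ab: "z = (a, b)" by force
      have E: "{(a, b). {a, b} \<in> G} \<subseteq> S"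
      proof clarify
        fix a b assume "{a, b} \<in> G"
        then obtain i j B where "{a, b} = {i, j}" "B \<in> P" "i \<in> B" "j \<in> B"
          unfolding G_def by blast
        then show "(a, b) \<in> S" unfolding S_def by (auto simp: doubleton_eq_iff)
      qed
      have "(a, b) \<in> {(a, b). {a, b} \<in> G}\<^sup>*" using z ab by (auto simp: RG_def reachable_def)
      then have "(a, b) \<in> S \<or> a = b"
      proof (induction rule: rtrancl_induct)
        case (step y z)
        then show ?case using E trS by (auto dest: transD)
      qed simp
      moreover have "a \<in> {1..n}" using z ab by (auto simp: RG_def)
      then have "(a, a) \<in> S" using PU unfolding S_def by auto
      ultimately show "z \<in> S" using ab by auto
    qed
  next
    show "S \<subseteq> RG n G"
    proof clarify
      fix a b assume ab: "(a, b) \<in> S"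
      then obtain B where B: "B \<in> P" "a \<in> B" "b \<in> B" unfolding S_def by auto
      have "(a, b) \<in> {(a, b). {a, b} \<in> G}\<^sup>*"
      proof (cases "a = b")
        case False
        then have "{a, b} \<in> G" unfolding G_def using B by blast
        then show ?thesis by auto
      qed simp
      moreover have "a \<in> {1..n}" "b \<in> {1..n}" using B PU by auto
      ultimately show "(a, b) \<in> RG n G" by (auto simp: RG_def reachable_def)
    qed
  qed
  define C where "C = graph_equiv n `` {G}"
  have C: "C \<in> graph_classes n" unfolding C_def graph_classes_def using Gf by (rule quotientI)
  have "(G, SOME G. G \<in> C) \<in> graph_equiv n"
    using class_some(1)[OF C] unfolding C_def by auto
  then have "RG n (SOME G. G \<in> C) = S"
    using RG_eq_iff[OF Gf class_some(3)[OF C]] \<open>RG n G = S\<close> by simp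
  then have "Fg n C = P" unfolding Fg_def phi_def S_def using partition_on_eq_quotient[OF P] by simp
  with C show "\<exists>C\<in>graph_classes n. P = Fg n C" by auto
qed

definition psi :: "nat set set \<Rightarrow> (nat \<Rightarrow> real) \<Rightarrow> real" where
  "psi P = (\<lambda>x. \<Sum>B\<in>P. \<Prod>i\<in>B. x i)"

definition ind :: "nat set \<Rightarrow> nat \<Rightarrow> real" where
  "ind A = (\<lambda>i. if i \<in> A then 1 else 0)"

lemma prod_ind: "finite B \<Longrightarrow> (\<Prod>i\<in>B. ind A i) = (if B \<subseteq> A then 1 else 0)"
  by (auto simp: ind_def prod_zero_iff intro!: prod.neutral)

lemma part_fin:
  assumes "partition_on {1..n::nat} P"
  shows "finite P" "\<And>B. B \<in> P \<Longrightarrow> finite B" "\<And>B. B \<in> P \<Longrightarrow> B \<noteq> {}"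
    "\<And>B C. B \<in> P \<Longrightarrow> C \<in> P \<Longrightarrow> B \<noteq> C \<Longrightarrow> B \<inter> C = {}"
proof -
  show "finite P" by (rule finite_elements[OF _ assms]) simp
  show "\<And>B. B \<in> P \<Longrightarrow> finite B" using assms unfolding partition_on_def
    by (metis Sup_upper finite_atLeastAtMost finite_subset)
  show "\<And>B. B \<in> P \<Longrightarrow> B \<noteq> {}" using assms unfolding partition_on_def by auto
  show "\<And>B C. B \<in> P \<Longrightarrow> C \<in> P \<Longrightarrow> B \<noteq> C \<Longrightarrow> B \<inter> C = {}"
    using assms unfolding partition_on_def disjoint_def by auto
qed

lemma psi_nz_D:
  assumes "partition_on {1..n} P" "psi P (ind A) \<noteq> 0"
  shows "\<exists>C\<in>P. C \<subseteq> A"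
proof (rule ccontr)
  assume "\<not> ?thesis"
  then have "psi P (ind A) = 0"
    unfolding psi_def using part_fin(2)[OF assms(1)] by (auto simp: prod_ind intro!: sum.neutral)
  with assms show False by simp
qed

lemma psi_nz_I:
  assumes "partition_on {1..n} P" "B \<in> P" "B \<subseteq> A"
  shows "psi P (ind A) \<noteq> 0"
proof -
  have "(\<Prod>i\<in>B. ind A i) \<le> psi P (ind A)"
    unfolding psi_def
    by (rule member_le_sum) (use assms part_fin[OF assms(1)] in \<open>auto simp: ind_def intro: prod_nonneg\<close>)
  then show ?thesis using assms part_fin(2)[OF assms(1) assms(2)] by (simp add: prod_ind)
qed

lemma psi_sub:
  assumes P: "partition_on {1..n} P" and Q: "partition_on {1..n} Q" and eq: "psi P = psi Q"
  shows "P \<subseteq> Q"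
proof
  fix B assume B: "B \<in> P"
  then have "psi Q (ind B) \<noteq> 0" using psi_nz_I[OF P B] eq by simp
  then obtain C where C: "C \<in> Q" "C \<subseteq> B" using psi_nz_D[OF Q] by blast
  then have "psi P (ind C) \<noteq> 0" using psi_nz_I[OF Q C(1)] eq by simp
  then obtain B' where B': "B' \<in> P" "B' \<subseteq> C" using psi_nz_D[OF P] by blast
  have "B' = B"
    using part_fin(3,4)[OF P] B B' C by blast
  then show "B \<in> Q" using B' C by auto
qed

lemma psi_in_DM:
  assumes P: "partition_on {1..n} P"
  shows "psi P \<in> DM n"
proof -
  note pf = part_fin[OF P]
  obtain e where e: "bij_betw e {0..<card P} P" using ex_bij_betw_nat_finite[OF pf(1)] by blast
  define k where "k = card P"
  define m where "m i = card (e i)" for i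
  define h where "h i = (SOME h. bij_betw h {0..<card (e i)} (e i))" for i
  define v where "v i j = h i j" for i j
  have eP: "i < k \<Longrightarrow> e i \<in> P" for i using e by (auto simp: k_def bij_betw_def)
  have h: "bij_betw (h i) {0..<m i} (e i)" if "i < k" for i
  proof -
    have "\<exists>h. bij_betw h {0..<card (e i)} (e i)"
      by (rule ex_bij_betw_nat_finite, rule pf(2), rule eP, rule that)
    then show ?thesis unfolding h_def m_def by (rule someI_ex)
  qed
  have PU: "\<Union>P = {1..n}" using P by (simp add: partition_on_def)
  have "(\<forall>i<k. 1 \<le> m i)"
    using pf(2,3) eP unfolding m_def by (simp add: Suc_le_eq card_gt_0_iff)
  moreover have "inj_on (\<lambda>(i, j). v i j) {(i, j). i < k \<and> j < m i}"
  proof (rule inj_onI, clarify)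
    fix i j i' j' assume a: "i < k" "j < m i" "i' < k" "j' < m i'" "v i j = v i' j'"
    have "v i j \<in> e i" using h[OF a(1)] a(2) unfolding v_def bij_betw_def by auto
    moreover have "v i' j' \<in> e i'" using h[OF a(3)] a(4) unfolding v_def bij_betw_def by auto
    ultimately have "v i j \<in> e i \<inter> e i'" using a(5) by simp
    then have "e i = e i'" using pf(4) eP a(1,3) by blast
    then have "i = i'" using e a unfolding bij_betw_def inj_on_def k_def by auto
    then show "i = i' \<and> j = j'" using h[of i] a unfolding bij_betw_def inj_on_def v_def by auto
  qed
  moreover have "(\<lambda>(i, j). v i j) ` {(i, j). i < k \<and> j < m i} = {1..n}"
  proof
    show "(\<lambda>(i, j). v i j) ` {(i, j). i < k \<and> j < m i} \<subseteq> {1..n}"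
      using h eP PU unfolding v_def bij_betw_def by fastforce
  next
    show "{1..n} \<subseteq> (\<lambda>(i, j). v i j) ` {(i, j). i < k \<and> j < m i}"
    proof
      fix x assume "x \<in> {1..n}"
      then have "x \<in> \<Union>P" using PU by simp
      then obtain B where B: "B \<in> P" "x \<in> B" by (rule UnionE)
      have "B \<in> e ` {0..<card P}" using e B by (simp add: bij_betw_def)
      then obtain i where "i \<in> {0..<card P}" "B = e i" by (rule imageE)
      then have i: "i < k" "B = e i" unfolding k_def by auto
      have "x \<in> h i ` {0..<m i}" using h[OF i(1)] B i(2) by (simp add: bij_betw_def)
      then obtain j where "j \<in> {0..<m i}" "x = h i j" by (rule imageE)
      then show "x \<in> (\<lambda>(i, j). v i j) ` {(i, j). i < k \<and> j < m i}"
        using i unfolding v_def by auto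
    qed
  qed
  moreover have "psi P = (\<lambda>x. \<Sum>i<k. \<Prod>j<m i. x (v i j))"
  proof
    fix x :: "nat \<Rightarrow> real"
    have "(\<Sum>i<k. \<Prod>j<m i. x (v i j)) = (\<Sum>i<k. \<Prod>b\<in>e i. x b)"
    proof (rule sum.cong[OF refl])
      fix i assume "i \<in> {..<k}"
      then have "bij_betw (h i) {..<m i} (e i)" using h by (simp add: lessThan_atLeast0)
      then show "(\<Prod>j<m i. x (v i j)) = (\<Prod>b\<in>e i. x b)"
        unfolding v_def by (rule prod.reindex_bij_betw)
    qed
    also have "\<dots> = (\<Sum>B\<in>P. \<Prod>b\<in>B. x b)"
      using e unfolding k_def lessThan_atLeast0 by (rule sum.reindex_bij_betw)
    finally show "psi P x = (\<Sum>i<k. \<Prod>j<m i. x (v i j))" unfolding psi_def by simp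
  qed
  ultimately show ?thesis unfolding DM_def by blast
qed

lemma DM_psi:
  assumes "y \<in> DM n"
  shows "\<exists>P. partition_on {1..n} P \<and> y = psi P"
proof -
  obtain k :: nat and m :: "nat \<Rightarrow> nat" and v :: "nat \<Rightarrow> nat \<Rightarrow> nat" where m: "\<forall>i<k. 1 \<le> m i"
    and inj: "inj_on (\<lambda>(i, j). v i j) {(i, j). i < k \<and> j < m i}"
    and img: "(\<lambda>(i, j). v i j) ` {(i, j). i < k \<and> j < m i} = {1..n}"
    and y: "y = (\<lambda>x. \<Sum>i<k. \<Prod>j<m i. x (v i j))"
    using assms unfolding DM_def mem_Collect_eq by blast
  define blk where "blk i = v i ` {..<m i}" for i
  define P where "P = blk ` {..<k}"
  have disj: "i < k \<Longrightarrow> i' < k \<Longrightarrow> i \<noteq> i' \<Longrightarrow> blk i \<inter> blk i' = {}" for i i'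
    using inj unfolding blk_def inj_on_def by fastforce
  have ne: "blk i \<noteq> {}" if "i < k" for i
  proof -
    have "0 < m i" using m that by auto
    then show ?thesis unfolding blk_def by auto
  qed
  have injb: "inj_on blk {..<k}"
    by (rule inj_onI) (use disj ne in \<open>fastforce\<close>)
  have injv: "i < k \<Longrightarrow> inj_on (v i) {..<m i}" for i
    using inj unfolding inj_on_def by fastforce
  have "partition_on {1..n} P"
  proof (rule partition_onI)
    show "\<Union>P = {1..n}" unfolding P_def blk_def img[symmetric] by auto
    show "\<And>p q. p \<in> P \<Longrightarrow> q \<in> P \<Longrightarrow> p \<noteq> q \<Longrightarrow> disjnt p q"
      unfolding P_def disjnt_def using disj by blast
    show "{} \<notin> P" unfolding P_def using ne by auto
  qed
  moreover have "y = psi P"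
  proof
    fix x :: "nat \<Rightarrow> real"
    have "y x = (\<Sum>i<k. \<Prod>b\<in>blk i. x b)"
      unfolding y blk_def using injv by (auto intro!: sum.cong simp: prod.reindex)
    also have "\<dots> = psi P x"
      unfolding psi_def P_def using injb by (simp add: sum.reindex)
    finally show "y x = psi P x" .
  qed
  ultimately show ?thesis by blast
qed

lemma psi_bij: "bij_betw psi {P. partition_on {1..n} P} (DM n)"
proof (rule bij_betwI')
  fix P Q assume "P \<in> {P. partition_on {1..n} P}" "Q \<in> {P. partition_on {1..n} P}"
  then show "(psi P = psi Q) = (P = Q)" using psi_sub[of n P Q] psi_sub[of n Q P] by auto
next
  fix P assume "P \<in> {P. partition_on {1..n} P}"
  then show "psi P \<in> DM n" using psi_in_DM by simp
next
  fix y assume "y \<in> DM n"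
  then show "\<exists>P\<in>{P. partition_on {1..n} P}. y = psi P" using DM_psi by blast
qed

theorem theorem1:
  fixes n :: nat
  assumes "n \<ge> 1"
  shows "\<exists>f. bij_betw f (DM n) (graph_classes n)"
proof -
  have "bij_betw (inv_into (graph_classes n) (Fg n) \<circ> inv_into {P. partition_on {1..n} P} psi)
      (DM n) (graph_classes n)"
    by (rule bij_betw_trans[OF bij_betw_inv_into[OF psi_bij] bij_betw_inv_into[OF Fg_bij]])
  then show ?thesis by blast
qed

end
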